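(* Let $G$ be a torsion-free group, $\mathbb{F}$ a field, $\mathsf{a}$ a unit in $\mathbb{F}[G]$ with $|supp(\mathsf{a})|=4$ and $|S_{\mathsf{a}}|=12$, and let $\mathsf{b}\in\mathbb{F}[G]$ with $\mathsf{a}\mathsf{b}=1$. Then $U(\mathsf{a},\mathsf{b})$ is the induced subgraph on the vertex set $supp(\mathsf{b})$ of the Cayley graph of $G$ with respect to $S_{\mathsf{a}}$.
   Context: $supp(\gamma)=\{x\in G:\gamma_x\ne0\}$; $S_{\mathsf{a}}=\{h^{-1}h':h\ne h',\ h,h'\in supp(\mathsf{a})\}$. The unit graph $U(\mathsf{a},\mathsf{b})$ is the multigraph with vertex set $supp(\mathsf{b})$ whose edges are the sets $\{(h,h',g,g'),(h',h,g',g)\}$ with $h,h'\in supp(\mathsf{a})$, $g,g'\in supp(\mathsf{b})$, $g\ne g'$, $hg=h'g'$, each joining $g$ and $g'$. The Cayley graph of $G$ with respect to an inverse-closed $S\not\ni 1$ is the simple graph on $G$ in which $x,y$ are adjacent iff $xy^{-1}\in S$. *)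

theory Defs
  imports "HOL-Algebra.Group"
begin

text \<open>Group ring F[G] of a group G (HOL-Algebra locale) over a field 'k (type class):
  elements are finitely supported functions 'g => 'k vanishing outside carrier G.\<close>

definition supp :: "('g \<Rightarrow> 'k::zero) \<Rightarrow> 'g set" where
  "supp \<gamma> = {x. \<gamma> x \<noteq> 0}"

definition grp_ring_elem :: "('g, 'm) monoid_scheme \<Rightarrow> ('g \<Rightarrow> 'k::field) \<Rightarrow> bool" where
  "grp_ring_elem G \<gamma> \<longleftrightarrow> finite (supp \<gamma>) \<and> supp \<gamma> \<subseteq> carrier G"

definition grp_ring_one :: "('g, 'm) monoid_scheme \<Rightarrow> 'g \<Rightarrow> 'k::field" where
  "grp_ring_one G = (\<lambda>x. if x = \<one>\<^bsub>G\<^esub> then 1 else 0)"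

definition grp_ring_mult ::
  "('g, 'm) monoid_scheme \<Rightarrow> ('g \<Rightarrow> 'k::field) \<Rightarrow> ('g \<Rightarrow> 'k) \<Rightarrow> 'g \<Rightarrow> 'k" where
  "grp_ring_mult G \<alpha> \<beta> = (\<lambda>x. \<Sum>y\<in>supp \<alpha>. \<Sum>z\<in>supp \<beta>.
      if y \<otimes>\<^bsub>G\<^esub> z = x then \<alpha> y * \<beta> z else 0)"

definition grp_ring_unit :: "('g, 'm) monoid_scheme \<Rightarrow> ('g \<Rightarrow> 'k::field) \<Rightarrow> bool" where
  "grp_ring_unit G \<alpha> \<longleftrightarrow> grp_ring_elem G \<alpha> \<and>
     (\<exists>\<beta>. grp_ring_elem G \<beta> \<and> grp_ring_mult G \<alpha> \<beta> = grp_ring_one G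
                           \<and> grp_ring_mult G \<beta> \<alpha> = grp_ring_one G)"

definition torsion_free :: "('g, 'm) monoid_scheme \<Rightarrow> bool" where
  "torsion_free G \<longleftrightarrow> (\<forall>x\<in>carrier G. \<forall>n::nat. n > 0 \<longrightarrow> x [^]\<^bsub>G\<^esub> n = \<one>\<^bsub>G\<^esub> \<longrightarrow> x = \<one>\<^bsub>G\<^esub>)"

definition S_set :: "('g, 'm) monoid_scheme \<Rightarrow> ('g \<Rightarrow> 'k::zero) \<Rightarrow> 'g set" where
  "S_set G \<alpha> = {inv\<^bsub>G\<^esub> h \<otimes>\<^bsub>G\<^esub> h' | h h'. h \<in> supp \<alpha> \<and> h' \<in> supp \<alpha> \<and> h \<noteq> h'}"

text \<open>Edges of the unit multigraph U(a,b): each edge is the two-element set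
  {(h,h',g,g'),(h',h,g',g)}, joining g and g'.\<close>
definition unit_graph_edges ::
  "('g, 'm) monoid_scheme \<Rightarrow> ('g \<Rightarrow> 'k::zero) \<Rightarrow> ('g \<Rightarrow> 'k) \<Rightarrow> ('g \<times> 'g \<times> 'g \<times> 'g) set set" where
  "unit_graph_edges G \<alpha> \<beta> =
     {{(h, h', g, g'), (h', h, g', g)} | h h' g g'.
        h \<in> supp \<alpha> \<and> h' \<in> supp \<alpha> \<and> g \<in> supp \<beta> \<and> g' \<in> supp \<beta> \<and> g \<noteq> g'
        \<and> h \<otimes>\<^bsub>G\<^esub> g = h' \<otimes>\<^bsub>G\<^esub> g'}"

definition edge_joins :: "('g \<times> 'g \<times> 'g \<times> 'g) set \<Rightarrow> 'g \<Rightarrow> 'g \<Rightarrow> bool" where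
  "edge_joins e x y \<longleftrightarrow> (\<exists>h h'. (h, h', x, y) \<in> e)"

definition unit_graph_mult ::
  "('g, 'm) monoid_scheme \<Rightarrow> ('g \<Rightarrow> 'k::zero) \<Rightarrow> ('g \<Rightarrow> 'k) \<Rightarrow> 'g \<Rightarrow> 'g \<Rightarrow> nat" where
  "unit_graph_mult G \<alpha> \<beta> x y = card {e \<in> unit_graph_edges G \<alpha> \<beta>. edge_joins e x y}"

definition cayley_adj :: "('g, 'm) monoid_scheme \<Rightarrow> 'g set \<Rightarrow> 'g \<Rightarrow> 'g \<Rightarrow> bool" where
  "cayley_adj G S x y \<longleftrightarrow> x \<otimes>\<^bsub>G\<^esub> inv\<^bsub>G\<^esub> y \<in> S"

end

theory Submission
  imports Defs
begin

lemma grp_eq_iff: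
  fixes G (structure)
  assumes "group G" "h \<in> carrier G" "h' \<in> carrier G" "x \<in> carrier G" "y \<in> carrier G"
  shows "(h \<otimes>\<^bsub>G\<^esub> x = h' \<otimes>\<^bsub>G\<^esub> y) \<longleftrightarrow> (inv\<^bsub>G\<^esub> h \<otimes>\<^bsub>G\<^esub> h' = x \<otimes>\<^bsub>G\<^esub> inv\<^bsub>G\<^esub> y)"
proof -
  interpret group G by fact
  have "(h \<otimes> x = h' \<otimes> y) \<longleftrightarrow> (x = inv h \<otimes> h' \<otimes> y)"
    using assms by (metis inv_solve_left m_assoc m_closed inv_closed)
  also have "\<dots> \<longleftrightarrow> (x \<otimes> inv y = inv h \<otimes> h')"
    using assms by (metis inv_solve_right m_closed inv_closed)
  finally show ?thesis by auto
qed

lemma grp_cancel: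
  assumes "group G" "h \<in> carrier G" "x \<in> carrier G" "y \<in> carrier G"
    "h \<otimes>\<^bsub>G\<^esub> x = h \<otimes>\<^bsub>G\<^esub> y"
  shows "x = y"
  using assms by (metis group.is_monoid monoid.Units_l_cancel group.Units_eq)

theorem mainTheorem11:
  fixes G :: "('g, 'm) monoid_scheme" and a b :: "'g \<Rightarrow> 'k::field"
  assumes "group G"
    and "torsion_free G"
    and "grp_ring_unit G a"
    and "card (supp a) = 4"
    and "card (S_set G a) = 12"
    and "grp_ring_elem G b"
    and "grp_ring_mult G a b = grp_ring_one G"
  shows "\<forall>x\<in>supp b. \<forall>y\<in>supp b.
           unit_graph_mult G a b x y = (if x \<noteq> y \<and> cayley_adj G (S_set G a) x y then 1 else 0)"
proof (intro ballI)
  fix x y assume xb: "x \<in> supp b" and yb: "y \<in> supp b"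
  define A where "A = supp a"
  have finA: "finite A" using assms(4) A_def by (metis card.infinite zero_neq_numeral)
  have Ac: "A \<subseteq> carrier G" using assms(3) unfolding grp_ring_unit_def grp_ring_elem_def A_def by auto
  have xc: "x \<in> carrier G" "y \<in> carrier G" using xb yb assms(6) unfolding grp_ring_elem_def by auto
  define P where "P = A \<times> A - Id"
  define f where "f = (\<lambda>(h::'g, h'). inv\<^bsub>G\<^esub> h \<otimes>\<^bsub>G\<^esub> h')"
  have finP: "finite P" using finA P_def by auto
  have cardP: "card P = 12"
  proof -
    have "Id \<inter> A \<times> A = (\<lambda>h. (h,h)) ` A" by auto
    hence "card (Id \<inter> A \<times> A) = 4" using assms(4) A_def by (simp add: card_image inj_on_def)
    moreover have "P = A \<times> A - (Id \<inter> A \<times> A)" using P_def by auto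
    ultimately show ?thesis using finA assms(4) A_def
      by (simp add: card_Diff_subset card_cartesian_product)
  qed
  have SP: "S_set G a = f ` P"
    unfolding S_set_def f_def P_def A_def by auto
  have injf: "inj_on f P"
    using eq_card_imp_inj_on[OF finP] SP assms(5) cardP by simp
  define E where "E = {e \<in> unit_graph_edges G a b. edge_joins e x y}"
  define Q where "Q = {p \<in> P. f p = x \<otimes>\<^bsub>G\<^esub> inv\<^bsub>G\<^esub> y}"
  define m where "m = (\<lambda>(h::'g,h'::'g). {(h,h',x,y),(h',h,y,x)})"
  show "unit_graph_mult G a b x y = (if x \<noteq> y \<and> cayley_adj G (S_set G a) x y then 1 else 0)"
  proof (cases "x = y")
    case True
    have "E = {}"
      unfolding E_def unit_graph_edges_def edge_joins_def using True by auto
    thus ?thesis using True unfolding unit_graph_mult_def E_def by (metis card.empty)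
  next
    case False
    have EQ: "E = m ` Q"
    proof
      show "E \<subseteq> m ` Q"
      proof
        fix e assume "e \<in> E"
        then obtain h1 h1' g g' h h' where e: "e = {(h1, h1', g, g'), (h1', h1, g', g)}"
          and c: "h1 \<in> A" "h1' \<in> A" "g \<in> supp b" "g' \<in> supp b" "g \<noteq> g'"
            "h1 \<otimes>\<^bsub>G\<^esub> g = h1' \<otimes>\<^bsub>G\<^esub> g'"
          and hm: "(h, h', x, y) \<in> e"
          unfolding E_def unit_graph_edges_def edge_joins_def A_def by blast
        have eq: "e = m (h,h')" and hx: "h \<otimes>\<^bsub>G\<^esub> x = h' \<otimes>\<^bsub>G\<^esub> y" and hA: "h \<in> A" "h' \<in> A"
          using hm e c unfolding m_def by auto
        have "h \<noteq> h'"
        proof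
          assume "h = h'"
          hence "h \<otimes>\<^bsub>G\<^esub> x = h \<otimes>\<^bsub>G\<^esub> y" using hx by simp
          thus False using grp_cancel[OF assms(1) _ xc] hA Ac False by auto
        qed
        hence "(h,h') \<in> Q" unfolding Q_def P_def f_def
          using hA hx grp_eq_iff[OF assms(1) _ _ xc] Ac by auto
        thus "e \<in> m ` Q" using eq by auto
      qed
    next
      show "m ` Q \<subseteq> E"
      proof
        fix e assume "e \<in> m ` Q"
        then obtain h h' where e: "e = m (h,h')" and q: "(h,h') \<in> Q" by auto
        have hA: "h \<in> A" "h' \<in> A" using q unfolding Q_def P_def by auto
        have hx: "h \<otimes>\<^bsub>G\<^esub> x = h' \<otimes>\<^bsub>G\<^esub> y"
          using q grp_eq_iff[OF assms(1) _ _ xc] Ac hA unfolding Q_def f_def by auto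
        show "e \<in> E" unfolding E_def unit_graph_edges_def edge_joins_def e m_def
          using hA hx xb yb False A_def by blast
      qed
    qed
    have injm: "inj_on m Q"
    proof (rule inj_onI)
      fix p q assume "p \<in> Q" "q \<in> Q" and mm: "m p = m q"
      obtain a1 b1 where p: "p = (a1,b1)" by (cases p)
      obtain a2 b2 where q: "q = (a2,b2)" by (cases q)
      have "(a1,b1,x,y) \<in> m p" using p by (simp add: m_def)
      hence "(a1,b1,x,y) \<in> m q" using mm by simp
      thus "p = q" using p q False by (simp add: m_def)
    qed
    have cE: "card E = card Q" using EQ injm by (simp add: card_image)
    show ?thesis
    proof (cases "cayley_adj G (S_set G a) x y")
      case True
      then obtain p where p: "p \<in> P" "f p = x \<otimes>\<^bsub>G\<^esub> inv\<^bsub>G\<^esub> y"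
        unfolding cayley_adj_def SP by auto
      have "Q = {p}" unfolding Q_def using p injf by (auto simp: inj_on_def)
      thus ?thesis using True False cE unfolding unit_graph_mult_def E_def by simp
    next
      case nT: False
      have "Q = {}" unfolding Q_def using nT unfolding cayley_adj_def SP by (auto, metis imageI)
      thus ?thesis using nT cE unfolding unit_graph_mult_def E_def by simp
    qed
  qed
qed

end
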